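(* Let $z\ge1$, $k\ge1$, $X\subset[\Delta]^d$ finite, and $\gamma\ge1$ a fixed constant. Let $C\subseteq X$ be a set of $k$ centers that is a $\gamma$-approximation to the optimal $(k,z)$-medoids clustering on $X$. Fix $x\in X$ and let $S$ be an optimal $(k,z)$-medoids clustering on $X$ among those containing a center at $x$. Let $W\subseteq C$ be a set of $k-1$ centers such that $W\cup\{x\}$ has minimum $(k,z)$-medoids clustering cost on $X$ among all $(k-1)$-subsets of $C$, and let $C'=W\cup\{x\}$. Then \[\mathrm{Cost}(X,S)\le\mathrm{Cost}(X,C')\le(2^z+2^{2z}+2^{2z}\gamma)\cdot\mathrm{Cost}(X,S).\]
   Context: $\mathrm{Cost}(X,C)=\sum_{y\in X}\min_{c\in C}\|y-c\|_2^z$. The $(k,z)$-medoids clustering problem on $X$ asks for a set $C\subseteq X$ with $|C|\le k$ minimizing $\mathrm{Cost}(X,C)$; $C$ is a $\gamma$-approximation if its cost is at most $\gamma$ times the optimum. *)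

theory Defs
  imports "HOL-Analysis.Analysis"
begin

definition grid :: "nat \<Rightarrow> (real ^ 'd) set" where
  "grid \<Delta> = {p. \<forall>i. p $ i \<in> real ` {1..\<Delta>}}"

definition cost :: "real \<Rightarrow> (real ^ 'd) set \<Rightarrow> (real ^ 'd) set \<Rightarrow> real" where
  "cost z X C = (\<Sum>y\<in>X. Min ((\<lambda>c. norm (y - c) powr z) ` C))"

definition medoids_feasible :: "(real ^ 'd) set \<Rightarrow> nat \<Rightarrow> (real ^ 'd) set \<Rightarrow> bool" where
  "medoids_feasible X k C \<longleftrightarrow> C \<subseteq> X \<and> C \<noteq> {} \<and> card C \<le> k"

definition opt_cost :: "real \<Rightarrow> (real ^ 'd) set \<Rightarrow> nat \<Rightarrow> real" where
  "opt_cost z X k = Min {cost z X C | C. medoids_feasible X k C}"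

definition gamma_approx :: "real \<Rightarrow> real \<Rightarrow> (real ^ 'd) set \<Rightarrow> nat \<Rightarrow> (real ^ 'd) set \<Rightarrow> bool" where
  "gamma_approx \<gamma> z X k C \<longleftrightarrow> medoids_feasible X k C \<and> cost z X C \<le> \<gamma> * opt_cost z X k"

end

theory Submission
  imports Defs
begin

lemma nearest_exists:
  fixes A :: "(real ^ 'd) set"
  assumes "finite A" "A \<noteq> {}"
  shows "\<exists>a\<in>A. \<forall>c\<in>A. norm (y - a) \<le> norm (y - c)"
proof -
  have "Min ((\<lambda>c. norm (y - c)) ` A) \<in> (\<lambda>c. norm (y - c)) ` A"
    using assms by simp
  then obtain a where a: "a \<in> A" "norm (y - a) = Min ((\<lambda>c. norm (y - c)) ` A)" by auto
  show ?thesis using a assms by (intro bexI[of _ a]) auto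
qed

lemma min_powr_eq:
  fixes A :: "(real ^ 'd) set"
  assumes "finite A" "a \<in> A" "\<forall>c\<in>A. norm (y - a) \<le> norm (y - c)" "z \<ge> 0"
  shows "Min ((\<lambda>c. norm (y - c) powr z) ` A) = norm (y - a) powr z"
  using assms by (intro Min_eqI) (auto intro: powr_mono2)

lemma min_powr_le:
  fixes A :: "(real ^ 'd) set"
  assumes "finite A" "a \<in> A"
  shows "Min ((\<lambda>c. norm (y - c) powr z) ` A) \<le> norm (y - a) powr z"
  using assms by (intro Min_le) auto

lemma powr_tri:
  fixes a b z :: real
  assumes "0 \<le> a" "0 \<le> b" "z \<ge> 0" "t \<le> 2 * a + b" "0 \<le> t"
  shows "t powr z \<le> 2 powr (2*z) * a powr z + 2 powr z * b powr z"
proof -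
  define m where "m = max (2*a) b"
  have m0: "0 \<le> m" using assms m_def by auto
  have "t powr z \<le> (2 * m) powr z" using assms m_def by (intro powr_mono2) auto
  also have "\<dots> = 2 powr z * m powr z" using m0 by (simp add: powr_mult)
  also have "m powr z \<le> (2*a) powr z + b powr z"
    unfolding m_def by (cases "2*a \<le> b") (auto simp: max_def)
  hence "2 powr z * m powr z \<le> 2 powr z * ((2*a) powr z + b powr z)"
    by (intro mult_left_mono) auto
  also have "\<dots> = 2 powr z * 2 powr z * a powr z + 2 powr z * b powr z"
    using assms by (simp add: powr_mult algebra_simps)
  also have "2 powr z * 2 powr z = 2 powr (2*z)"
    by (simp add: powr_add[symmetric])
  finally show ?thesis by simp
qed

theorem lemma3p5:
  fixes z \<gamma> :: real and k \<Delta> :: nat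
    and X C S W :: "(real ^ 'd) set" and x :: "real ^ 'd"
  assumes "z \<ge> 1" and "k \<ge> 1" and "\<gamma> \<ge> 1"
    and "finite X" and "X \<subseteq> grid \<Delta>"
    and "C \<subseteq> X" and "card C = k" and "gamma_approx \<gamma> z X k C"
    and "x \<in> X"
    and "medoids_feasible X k S" and "x \<in> S"
    and "\<And>S'. medoids_feasible X k S' \<Longrightarrow> x \<in> S' \<Longrightarrow> cost z X S \<le> cost z X S'"
    and "W \<subseteq> C" and "card W = k - 1"
    and "\<And>W'. W' \<subseteq> C \<Longrightarrow> card W' = k - 1 \<Longrightarrow> cost z X (W \<union> {x}) \<le> cost z X (W' \<union> {x})"
  shows "cost z X S \<le> cost z X (W \<union> {x})
       \<and> cost z X (W \<union> {x}) \<le> (2 powr z + 2 powr (2*z) + 2 powr (2*z) * \<gamma>) * cost z X S"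
proof
  have finC: "finite C" using assms(4,6) finite_subset by blast
  have finS: "finite S" using assms(4,10) finite_subset unfolding medoids_feasible_def by blast
  have Cne: "C \<noteq> {}" using assms(2,7) by auto
  have Sne: "S \<noteq> {}" using assms(11) by auto
  have z0: "z \<ge> 0" using assms(1) by simp
  have feasW: "medoids_feasible X k (W' \<union> {x})" if "W' \<subseteq> C" "card W' = k - 1" for W'
  proof -
    have "finite W'" using that finC finite_subset by blast
    hence "card (W' \<union> {x}) \<le> card W' + 1" using card_insert_le_m1
      by (simp add: card_insert_if)
    thus ?thesis unfolding medoids_feasible_def using that assms(2,6,9) by auto
  qed
  show "cost z X S \<le> cost z X (W \<union> {x})"
    using assms(12)[OF feasW[OF assms(13,14)]] by simp
  define f where "f s = (SOME c. c \<in> C \<and> (\<forall>c'\<in>C. norm (s - c) \<le> norm (s - c')))" for s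
  have f: "f s \<in> C \<and> (\<forall>c'\<in>C. norm (s - f s) \<le> norm (s - c'))" for s
  proof -
    have "\<exists>c. c \<in> C \<and> (\<forall>c'\<in>C. norm (s - c) \<le> norm (s - c'))"
      using nearest_exists[OF finC Cne, of s] by blast
    thus ?thesis unfolding f_def by (rule someI_ex)
  qed
  define I where "I = f ` (S - {x})"
  have cardSx: "card (S - {x}) \<le> k - 1"
  proof -
    have "card (S - {x}) = card S - 1" using card_Diff_singleton[OF assms(11)] .
    moreover have "card S \<le> k" using assms(10) unfolding medoids_feasible_def by blast
    ultimately show ?thesis by linarith
  qed
  have IC: "I \<subseteq> C" using f unfolding I_def by auto
  have finI: "finite I" using IC finC finite_subset by blast
  have cardI: "card I \<le> k - 1" unfolding I_def using card_image_le[of "S - {x}" f] finS cardSx by simp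
  have "k - 1 - card I \<le> card (C - I)" using card_Diff_subset[OF finI IC] assms(7) cardI by simp
  then obtain T where T: "T \<subseteq> C - I" "card T = k - 1 - card I" "finite T"
    by (rule obtain_subset_with_card_n)
  define W' where "W' = I \<union> T"
  have W'C: "W' \<subseteq> C" using T IC unfolding W'_def by auto
  have cardW': "card W' = k - 1" unfolding W'_def using T finI cardI
    by (subst card_Un_disjoint) auto
  have finW': "finite W'" using W'C finC finite_subset by blast
  have IW': "I \<subseteq> W'" unfolding W'_def by auto
  have pt: "Min ((\<lambda>c. norm (y - c) powr z) ` (W' \<union> {x}))
      \<le> 2 powr (2*z) * Min ((\<lambda>c. norm (y - c) powr z) ` S) + 2 powr z * Min ((\<lambda>c. norm (y - c) powr z) ` C)"
    for y
  proof -
    obtain s where s: "s \<in> S" "\<forall>c\<in>S. norm (y - s) \<le> norm (y - c)"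
      using nearest_exists[OF finS Sne] by blast
    obtain cy where cy: "cy \<in> C" "\<forall>c\<in>C. norm (y - cy) \<le> norm (y - c)"
      using nearest_exists[OF finC Cne] by blast
    have eS: "Min ((\<lambda>c. norm (y - c) powr z) ` S) = norm (y - s) powr z"
      using min_powr_eq[OF finS s z0] .
    have eC: "Min ((\<lambda>c. norm (y - c) powr z) ` C) = norm (y - cy) powr z"
      using min_powr_eq[OF finC cy z0] .
    show ?thesis
    proof (cases "s = x")
      case True
      have "Min ((\<lambda>c. norm (y - c) powr z) ` (W' \<union> {x})) \<le> norm (y - s) powr z"
        using min_powr_le[of "W' \<union> {x}" x y z] finW' True by auto
      also have "\<dots> \<le> 2 powr (2*z) * norm (y - s) powr z"
      proof -
        have "1 \<le> 2 powr (2*z)" using z0 by (simp add: ge_one_powr_ge_zero)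
        moreover have "0 \<le> norm (y - s) powr z" by simp
        ultimately show ?thesis using mult_right_mono by fastforce
      qed
      also have "\<dots> \<le> 2 powr (2*z) * norm (y - s) powr z + 2 powr z * norm (y - cy) powr z"
        by simp
      finally show ?thesis using eS eC by simp
    next
      case False
      have fsW: "f s \<in> W' \<union> {x}" using IW' False s(1) unfolding I_def by auto
      have "norm (y - f s) \<le> norm (y - s) + norm (s - f s)"
        using norm_triangle_ineq[of "y - s" "s - f s"] by simp
      also have "norm (s - f s) \<le> norm (s - cy)" using f cy(1) by blast
      also have "norm (s - cy) \<le> norm (y - s) + norm (y - cy)"
        using norm_triangle_ineq[of "s - y" "y - cy"] by (simp add: norm_minus_commute)
      finally have tri: "norm (y - f s) \<le> 2 * norm (y - s) + norm (y - cy)" by linarith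
      have "Min ((\<lambda>c. norm (y - c) powr z) ` (W' \<union> {x})) \<le> norm (y - f s) powr z"
        using min_powr_le[OF _ fsW] finW' by auto
      also have "\<dots> \<le> 2 powr (2*z) * norm (y - s) powr z + 2 powr z * norm (y - cy) powr z"
        using powr_tri[OF _ _ z0 tri] by simp
      finally show ?thesis using eS eC by simp
    qed
  qed
  have "cost z X (W \<union> {x}) \<le> cost z X (W' \<union> {x})" using assms(15)[OF W'C cardW'] .
  also have "\<dots> \<le> (\<Sum>y\<in>X. 2 powr (2*z) * Min ((\<lambda>c. norm (y - c) powr z) ` S) + 2 powr z * Min ((\<lambda>c. norm (y - c) powr z) ` C))"
    unfolding cost_def by (intro sum_mono pt)
  also have "\<dots> = 2 powr (2*z) * cost z X S + 2 powr z * cost z X C"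
    unfolding cost_def by (simp add: sum.distrib sum_distrib_left)
  finally have A: "cost z X (W \<union> {x}) \<le> 2 powr (2*z) * cost z X S + 2 powr z * cost z X C" .
  have costS0: "cost z X S \<ge> 0" unfolding cost_def
    by (intro sum_nonneg) (use finS Sne in auto)
  have "opt_cost z X k \<le> cost z X S"
  proof -
    have fin: "finite {cost z X C | C. medoids_feasible X k C}"
    proof -
      have "{cost z X C | C. medoids_feasible X k C} \<subseteq> cost z X ` Pow X"
        unfolding medoids_feasible_def by auto
      thus ?thesis using assms(4) finite_subset by blast
    qed
    show ?thesis unfolding opt_cost_def using assms(10) by (intro Min_le[OF fin]) auto
  qed
  hence "cost z X C \<le> \<gamma> * cost z X S"
  proof -
    assume h: "opt_cost z X k \<le> cost z X S"
    have "cost z X C \<le> \<gamma> * opt_cost z X k" using assms(8) unfolding gamma_approx_def by blast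
    also have "\<dots> \<le> \<gamma> * cost z X S" using h assms(3) by (intro mult_left_mono) auto
    finally show ?thesis .
  qed
  hence "2 powr z * cost z X C \<le> 2 powr z * (\<gamma> * cost z X S)" by (intro mult_left_mono) auto
  also have "\<dots> \<le> 2 powr (2*z) * \<gamma> * cost z X S"
  proof -
    have "2 powr z \<le> 2 powr (2*z)" using z0 by (intro powr_mono) auto
    thus ?thesis using costS0 assms(3) by (simp add: mult.assoc mult_right_mono)
  qed
  finally have B: "2 powr z * cost z X C \<le> 2 powr (2*z) * \<gamma> * cost z X S" .
  have "0 \<le> 2 powr z * cost z X S" using costS0 by simp
  with A B show "cost z X (W \<union> {x}) \<le> (2 powr z + 2 powr (2*z) + 2 powr (2*z) * \<gamma>) * cost z X S"
    by (simp add: algebra_simps)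
qed

end
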